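(* Let $n$ and $s$ be positive integers and let $L=\{\ell_1,\ldots,\ell_s\}$ be a set of $s$ non-negative integers. Let $\mathcal{F}=\{F_1,\ldots,F_m\}$ be a family of subsets of $[n]=\{1,\ldots,n\}$ such that $|F_i\cap F_j|\in L$ for all $1\le i,j\le m$ with $i\neq j$, and suppose $\mathcal{F}$ is ordered, i.e. there exists an index $1\le r\le m$ such that $n\in F_i$ for each $1\le i\le r$, $n\notin F_i$ for each $i>r$, and $|F_i|\le |F_j|$ for all $1\le i<j\le m$. Then $$m\le \sum_{i=0}^{s}\binom{n-1}{i}.$$
   Context: $[n]$ denotes $\{1,2,\ldots,n\}$. *)

theory Defs
  imports Main
begin

end

theory Submission imports Defs Complex_Main "HOL-Library.Function_Algebras" begin

definition scl :: "real \<Rightarrow> (nat set \<Rightarrow> real) \<Rightarrow> (nat set \<Rightarrow> real)" where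
  "scl c f = (\<lambda>X. c * f X)"

interpretation fv: vector_space scl
  by unfold_locales (auto simp: scl_def fun_eq_iff algebra_simps)

definition mon :: "nat set \<Rightarrow> nat set \<Rightarrow> real" where
  "mon S = (\<lambda>X. if S \<subseteq> X then 1 else 0)"

definition Pk :: "nat set \<Rightarrow> nat \<Rightarrow> (nat set \<Rightarrow> real) set" where
  "Pk A k = fv.span (mon ` {S. S \<subseteq> A \<and> card S \<le> k})"

lemma sum_fun_apply: "(sum f T) x = (\<Sum>a\<in>T. f a x)"
  by (induction T rule: infinite_finite_induct) auto

lemma Pk_mono: "k \<le> k' \<Longrightarrow> Pk A k \<subseteq> Pk A k'"
  unfolding Pk_def by (rule fv.span_mono) auto

lemma const_Pk: "(\<lambda>X. c) \<in> Pk A k"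
proof -
  have "mon {} \<in> Pk A k" unfolding Pk_def by (rule fv.span_base) auto
  then have "scl c (mon {}) \<in> Pk A k" unfolding Pk_def by (rule fv.span_scale)
  then show ?thesis by (simp add: scl_def mon_def)
qed

lemma card_Pk:
  assumes "finite A" "B \<subseteq> A"
  shows "(\<lambda>X. real (card (B \<inter> X))) \<in> Pk A 1"
proof -
  have fB: "finite B" using assms finite_subset by blast
  have "(\<lambda>X. real (card (B \<inter> X))) = (\<Sum>a\<in>B. mon {a})"
  proof
    fix X
    have "real (card (B \<inter> X)) = (\<Sum>a\<in>B. if a \<in> X then 1 else 0)"
      using fB by (simp add: sum.If_cases Int_def)
    then show "real (card (B \<inter> X)) = (\<Sum>a\<in>B. mon {a}) X"
      by (simp add: sum_fun_apply mon_def)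
  qed
  also have "\<dots> \<in> Pk A 1" unfolding Pk_def
    by (rule fv.span_sum, rule fv.span_base) (use assms in auto)
  finally show ?thesis .
qed

lemma mult_span_left:
  assumes "f \<in> fv.span S" "\<And>s. s \<in> S \<Longrightarrow> s * g \<in> fv.span T"
  shows "f * g \<in> fv.span T"
  using assms(1)
proof (induction rule: fv.span_induct_alt)
  case base then show ?case by (metis mult_zero_left fv.span_zero)
next
  case (step c x y)
  have "(scl c x + y) * g = scl c (x * g) + y * g"
    by (simp add: scl_def fun_eq_iff algebra_simps)
  moreover have "scl c (x * g) + y * g \<in> fv.span T"
  proof (rule fv.span_add)
    show "scl c (x * g) \<in> fv.span T" using step(1) assms(2) by (intro fv.span_scale) blast
    show "y * g \<in> fv.span T" by (rule step(2))
  qed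
  ultimately show ?case by argo
qed

lemma mon_mult: "mon S * mon T = mon (S \<union> T)"
  by (auto simp: mon_def fun_eq_iff)

lemma Pk_mult:
  assumes "finite A" "f \<in> Pk A k" "g \<in> Pk A 1"
  shows "f * g \<in> Pk A (k + 1)"
proof -
  have "f * g \<in> fv.span (mon ` {S. S \<subseteq> A \<and> card S \<le> k + 1})"
  proof (rule mult_span_left[OF assms(2)[unfolded Pk_def]])
    fix s assume "s \<in> mon ` {S. S \<subseteq> A \<and> card S \<le> k}"
    then obtain S where S: "s = mon S" "S \<subseteq> A" "card S \<le> k" by auto
    have "g * s \<in> fv.span (mon ` {S. S \<subseteq> A \<and> card S \<le> k + 1})"
    proof (rule mult_span_left[OF assms(3)[unfolded Pk_def]])
      fix t assume "t \<in> mon ` {S. S \<subseteq> A \<and> card S \<le> 1}"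
      then obtain T where T: "t = mon T" "T \<subseteq> A" "card T \<le> 1" by auto
      have fin: "finite S" "finite T" using S T assms(1) finite_subset by auto
      have "card (T \<union> S) \<le> card T + card S" by (rule card_Un_le)
      then have "card (T \<union> S) \<le> k + 1" using S T by linarith
      then have "mon (T \<union> S) \<in> mon ` {S. S \<subseteq> A \<and> card S \<le> k + 1}"
        using S T by auto
      then show "t * s \<in> fv.span (mon ` {S. S \<subseteq> A \<and> card S \<le> k + 1})"
        using S T by (simp add: mon_mult fv.span_base)
    qed
    then show "s * g \<in> fv.span (mon ` {S. S \<subseteq> A \<and> card S \<le> k + 1})"
      by (simp add: mult.commute)
  qed
  then show ?thesis unfolding Pk_def .
qed

lemma prod_Pk:
  assumes "finite A" "B \<subseteq> A" "finite L'"
  shows "(\<lambda>X. \<Prod>l\<in>L'. real (card (B \<inter> X)) + c - real l) \<in> Pk A (card L')"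
  using assms(3)
proof (induction L' rule: finite_induct)
  case empty
  then show ?case using const_Pk[of 1 A 0] by simp
next
  case (insert l L')
  have fac: "(\<lambda>X. real (card (B \<inter> X)) + c - real l) \<in> Pk A 1"
  proof -
    have "(\<lambda>X. real (card (B \<inter> X))) + (\<lambda>X. c - real l) \<in> Pk A 1"
      unfolding Pk_def using card_Pk[OF assms(1,2)] const_Pk[of "c - real l" A 1]
      by (intro fv.span_add) (auto simp: Pk_def)
    then show ?thesis by (simp add: plus_fun_def algebra_simps)
  qed
  have "(\<lambda>X. \<Prod>l\<in>L'. real (card (B \<inter> X)) + c - real l) * (\<lambda>X. real (card (B \<inter> X)) + c - real l)
        \<in> Pk A (card L' + 1)"
    by (rule Pk_mult[OF assms(1) insert.IH fac])
  then show ?case using insert.hyps by (simp add: times_fun_def mult.commute)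
qed

lemma card_low_subsets:
  assumes "finite A"
  shows "card {S. S \<subseteq> A \<and> card S \<le> s} = (\<Sum>i=0..s. card A choose i)"
proof (induction s)
  case 0
  have "{S. S \<subseteq> A \<and> card S \<le> 0} = {S. S \<subseteq> A \<and> card S = 0}" by auto
  then show ?case using n_subsets[OF assms, of 0] by simp
next
  case (Suc s)
  have eq: "{S. S \<subseteq> A \<and> card S \<le> Suc s} = {S. S \<subseteq> A \<and> card S \<le> s} \<union> {S. S \<subseteq> A \<and> card S = Suc s}"
    by auto
  have "card ({S. S \<subseteq> A \<and> card S \<le> s} \<union> {S. S \<subseteq> A \<and> card S = Suc s})
      = card {S. S \<subseteq> A \<and> card S \<le> s} + card {S. S \<subseteq> A \<and> card S = Suc s}"
    by (rule card_Un_disjoint) (use assms in auto)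
  then show ?case using Suc n_subsets[OF assms, of "Suc s"] eq by simp
qed

theorem theorem3:
  fixes n s m :: nat and L :: "nat set" and F :: "nat \<Rightarrow> nat set"
  assumes "n > 0" and "s > 0"
    and "finite L" and "card L = s"
    and "\<forall>i\<in>{1..m}. F i \<subseteq> {1..n}"
    and "inj_on F {1..m}"
    and "\<forall>i\<in>{1..m}. \<forall>j\<in>{1..m}. i \<noteq> j \<longrightarrow> card (F i \<inter> F j) \<in> L"
    and "\<exists>r. 1 \<le> r \<and> r \<le> m \<and> (\<forall>i\<in>{1..r}. n \<in> F i)
              \<and> (\<forall>i\<in>{r<..m}. n \<notin> F i)"
    and "\<forall>i\<in>{1..m}. \<forall>j\<in>{1..m}. i < j \<longrightarrow> card (F i) \<le> card (F j)"
  shows "m \<le> (\<Sum>i=0..s. (n - 1) choose i)"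
proof -
  define A where "A = {1..<n}"
  have finA: "finite A" and cardA: "card A = n - 1" by (auto simp: A_def)
  obtain r where r: "1 \<le> r" "r \<le> m" "\<forall>i\<in>{1..r}. n \<in> F i" "\<forall>i\<in>{r<..m}. n \<notin> F i"
    using assms(8) by blast
  define B where "B i = F i - {n}" for i
  define c where "c i = (if n \<in> F i then 1 else 0 :: real)" for i
  define Li where "Li i = {l\<in>L. l < card (F i)}" for i
  define g where "g i = (\<lambda>X. \<Prod>l\<in>Li i. real (card (B i \<inter> X)) + c i - real l)" for i
  have finF: "finite (F i)" if "i \<in> {1..m}" for i
    using assms(5) that finite_subset by blast
  have finLi: "finite (Li i)" for i using assms(3) by (simp add: Li_def)
  have BA: "B i \<subseteq> A" if "i \<in> {1..m}" for i
  proof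
    fix x assume "x \<in> B i"
    then have "x \<in> F i" "x \<noteq> n" by (auto simp: B_def)
    then have "x \<in> {1..n}" using assms(5) that by blast
    then show "x \<in> A" using \<open>x \<noteq> n\<close> by (auto simp: A_def)
  qed
  define T where "T = mon ` {S. S \<subseteq> A \<and> card S \<le> s}"
  have gP: "g i \<in> fv.span T" if "i \<in> {1..m}" for i
  proof -
    have "g i \<in> Pk A (card (Li i))"
      unfolding g_def by (rule prod_Pk[OF finA BA[OF that] finLi])
    moreover have "card (Li i) \<le> s"
      using assms(3,4) by (metis Li_def card_mono mem_Collect_eq subsetI)
    ultimately show ?thesis using Pk_mono unfolding Pk_def T_def by blast
  qed
  have eval: "g i (B j) = (\<Prod>l\<in>Li i. real (card (F i \<inter> F j)) - real l)"
    if ij: "i \<in> {1..m}" "j \<in> {1..m}" "j \<le> i" for i j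
  proof -
    have "real (card (B i \<inter> B j)) + c i = real (card (F i \<inter> F j))"
    proof (cases "n \<in> F i")
      case True
      then have "i \<le> r" using r(4) ij by force
      then have "n \<in> F j" using r(3) ij by auto
      then have "F i \<inter> F j = insert n (B i \<inter> B j)" using True by (auto simp: B_def)
      moreover have "finite (B i \<inter> B j)" using finF[OF ij(1)] by (auto simp: B_def)
      moreover have "n \<notin> B i \<inter> B j" by (auto simp: B_def)
      ultimately show ?thesis using True by (simp add: c_def)
    next
      case False
      then have "F i \<inter> F j = B i \<inter> B j" by (auto simp: B_def)
      then show ?thesis using False by (simp add: c_def)
    qed
    then show ?thesis by (simp add: g_def)
  qed
  have diag: "g i (B i) \<noteq> 0" if "i \<in> {1..m}" for i
  proof -
    have "(\<Prod>l\<in>Li i. real (card (F i \<inter> F i)) - real l) \<noteq> 0"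
      using finLi by (simp add: Li_def)
    then show ?thesis using eval[OF that that] by simp
  qed
  have low: "g i (B j) = 0" if ij: "i \<in> {1..m}" "j \<in> {1..m}" "j < i" for i j
  proof -
    let ?l = "card (F i \<inter> F j)"
    have inL: "?l \<in> L" using assms(7) ij by auto
    have "?l < card (F i)"
    proof (rule ccontr)
      assume "\<not> ?l < card (F i)"
      then have "card (F i) \<le> ?l" by simp
      then have "F i \<inter> F j = F i"
        using finF[OF ij(1)] by (metis Int_lower1 card_seteq)
      then have sub: "F i \<subseteq> F j" by blast
      have "card (F j) \<le> card (F i)" using assms(9) ij by auto
      then have "F i = F j" using sub finF[OF ij(2)] by (metis card_seteq)
      then show False using assms(6) ij by (metis inj_onD less_irrefl)
    qed
    then have "?l \<in> Li i" using inL by (simp add: Li_def)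
    then have "(\<Prod>l\<in>Li i. real ?l - real l) = 0"
      using finLi by (intro prod_zero) auto
    then show ?thesis using eval[OF ij(1,2)] ij(3) by simp
  qed
  have injg: "inj_on g {1..m}"
  proof (rule inj_onI)
    fix i j assume ij: "i \<in> {1..m}" "j \<in> {1..m}" "g i = g j"
    show "i = j"
    proof (rule ccontr)
      assume "i \<noteq> j"
      then consider "i < j" | "j < i" by linarith
      then show False
      proof cases
        case 1 then show False using low[OF ij(2,1)] diag[OF ij(1)] ij(3) by simp
      next
        case 2 then show False using low[OF ij(1,2)] diag[OF ij(2)] ij(3) by simp
      qed
    qed
  qed
  have indep: "\<not> fv.dependent (g ` {1..m})"
  proof
    assume "fv.dependent (g ` {1..m})"
    then obtain t u v where t: "finite t" "t \<subseteq> g ` {1..m}" "(\<Sum>v\<in>t. scl (u v) v) = 0"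
      "v \<in> t" "u v \<noteq> 0"
      unfolding fv.dependent_explicit by blast
    define I where "I = {i\<in>{1..m}. g i \<in> t \<and> u (g i) \<noteq> 0}"
    obtain iv where "iv \<in> {1..m}" "v = g iv" using t(2,4) by blast
    then have "iv \<in> I" using t(4,5) by (simp add: I_def)
    then have "I \<noteq> {}" by blast
    moreover have "finite I" by (simp add: I_def)
    ultimately have i0: "Min I \<in> I" by simp
    define i0 where "i0 = Min I"
    have i0I: "i0 \<in> I" using i0 by (simp add: i0_def)
    have mn: "i0 \<le> i" if "i \<in> I" for i using that \<open>finite I\<close> by (simp add: i0_def)
    have "0 = (\<Sum>v\<in>t. scl (u v) v) (B i0)" using t(3) by simp
    also have "\<dots> = (\<Sum>v\<in>t. u v * v (B i0))" by (simp add: sum_fun_apply scl_def)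
    also have "\<dots> = u (g i0) * g i0 (B i0) + (\<Sum>v\<in>t - {g i0}. u v * v (B i0))"
      using i0I t(1) by (intro sum.remove) (auto simp: I_def)
    also have "(\<Sum>v\<in>t - {g i0}. u v * v (B i0)) = 0"
    proof (rule sum.neutral, rule ballI)
      fix v assume v: "v \<in> t - {g i0}"
      then obtain i where i: "i \<in> {1..m}" "v = g i" using t(2) by blast
      show "u v * v (B i0) = 0"
      proof (cases "u v = 0")
        case False
        then have "i \<in> I" using i v by (auto simp: I_def)
        then have "i0 < i" using mn[of i] i v by (cases "i = i0") auto
        then show ?thesis using low[OF i(1)] i0I i by (simp add: I_def)
      qed simp
    qed
    finally have "u (g i0) * g i0 (B i0) = 0" by simp
    moreover have "u (g i0) \<noteq> 0" "g i0 (B i0) \<noteq> 0" using i0I diag by (auto simp: I_def)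
    ultimately show False by simp
  qed
  have finT: "finite T" using finA by (simp add: T_def)
  have "finite (g ` {1..m}) \<and> card (g ` {1..m}) \<le> card T"
    by (rule fv.independent_span_bound[OF finT indep]) (use gP in auto)
  then have "m \<le> card T" using card_image[OF injg] by simp
  also have "card T \<le> card {S. S \<subseteq> A \<and> card S \<le> s}" unfolding T_def
    by (rule card_image_le) (use finA in simp)
  also have "\<dots> = (\<Sum>i=0..s. (n - 1) choose i)" using card_low_subsets[OF finA] cardA by simp
  finally show ?thesis .
qed

end
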